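(* Let $D=N_1\ltimes\dots\ltimes N_n$ be the dynamics of an $\mathrm{RNC}_+$ with input domain $U$, let $D'=\langle U,X',f\rangle$ be subdynamics of $D$, let $\lambda_\Sigma:U\to\Sigma$ be a symbol grounding and $u_e\in U$. For every $i\in[n]$ and every $\vec x,\vec y\in X'_{[i]}$, if $\bar\rho_i(\vec x)=\bar\rho_i(\vec y)$ then $\vec x\sim\vec y$.
   Context: Neuron $N_i$ has state update $f_i(x_i,\langle u,x_1,\dots,x_{i-1}\rangle)=\tanh(w_i x_i+\beta_i(u,x_1,\dots,x_{i-1}))$ with $w_i>0$ and $\beta_i$ a feedforward network; $\bar f_i(\langle x_1,\dots,x_i\rangle,u)=\langle f_1(x_1,u_1),\dots,f_i(x_i,u_i)\rangle$ with $u_j=\langle u,x_1,\dots,x_{j-1}\rangle$. $X'\subseteq X_1\times\dots\times X_n$ satisfies $f(X'\times U)\subseteq X'$, and $X'_{[i]}=\{\langle z_1,\dots,z_i\rangle:\exists z_{i+1},\dots,z_n,\ \langle z_1,\dots,z_n\rangle\in X'\}$. For $\vec x=\langle x_1,\dots,x_i\rangle$, define $x_{j,0}=x_j$, $x_{j,t}=f_j(x_{j,t-1},\langle u_e,x_{1,t-1},\dots,x_{j-1,t-1}\rangle)$, let $\mathcal{S}^*_j(u_e,x_1,\dots,x_j)=\lim_t x_{j,t}$ (this limit exists) and $\bar{\mathcal{S}}^*_i(u_e,\vec x)=\langle\mathcal S^*_1(u_e,x_1),\dots,\mathcal S^*_i(u_e,x_1,\dots,x_i)\rangle$. On $X'_{[i]}$: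 $\sim_e$ is the smallest equivalence relation with $\vec x\sim_e\vec y$ whenever $\bar{\mathcal S}^*_i(u_e,\vec x)=\bar{\mathcal S}^*_i(u_e,\vec y)$; $\sim$ is the smallest equivalence relation containing $\sim_e$ and such that $\vec x\sim\vec y$ implies $\bar f_i(\vec x,u)\sim\bar f_i(\vec y,v)$ for all $u,v\in U$ with $\lambda_\Sigma(u)=\lambda_\Sigma(v)$; $[\vec x]$ denotes the $\sim$-class. Pivots: for neuron $j$ with $w_j>1$, let $p_-^{(j)},p_+^{(j)}$ be the pivots $p_-=p_-^{v_-}$, $p_+=p_+^{v_+}$ of $g_v(x)=x-\tanh(w_jx+v)$, where $p_-^v<p_+^v$ are the local maximum/minimum points of $g_v$ and $v_-$ (resp. $v_+$) is the unique $v$ with $g_v(p_-^v)=0$ (resp. $g_v(p_+^v)=0$). Let $\kappa_j(x)=1$ if $x\le p_-^{(j)}$, $2$ if $p_-^{(j)}<x<p_+^{(j)}$, $3$ if $p_+^{(j)}\le x$ (when $w_j\le1$, $\kappa_j$ is an arbitrary map into $\{1,2,3\}$). Set $\eta_j(x_1,\dots,x_j)=\kappa_j(\mathcal S^*_j(u_e,x_1,\dots,x_j))$, $\bar\eta_i(\vec x)=\langle\eta_1(x_1),\dots,\eta_i(x_1,\dots,x_i)\rangle\in\{1,2,3\}^i$, and $\bar\rho_i(\vec x)=\min\bar\eta_i([\vec x])$, the minimum in the lexicographic order on $\{1,2,3\}^i$. *)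

theory Defs
  imports Complex_Main "HOL-Library.List_Lexorder"
begin

text \<open>States of an i-neuron prefix are real lists of length i; neuron j is 0-indexed
  (neuron j here is neuron N_(j+1) of the paper). w j is its self-weight and
  beta j u xs its bias network applied to the input u and the previous states xs
  (a list of length j).\<close>

definition nstep :: "(nat \<Rightarrow> real) \<Rightarrow> (nat \<Rightarrow> 'u \<Rightarrow> real list \<Rightarrow> real) \<Rightarrow> real list \<Rightarrow> 'u \<Rightarrow> real list" where
  "nstep w beta xs u = map (\<lambda>j. tanh (w j * xs ! j + beta j u (take j xs))) [0..<length xs]"

definition Sstar :: "(nat \<Rightarrow> real) \<Rightarrow> (nat \<Rightarrow> 'u \<Rightarrow> real list \<Rightarrow> real) \<Rightarrow> 'u \<Rightarrow> real list \<Rightarrow> real list" where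
  "Sstar w beta ue xs = map (\<lambda>j. lim (\<lambda>t. (((\<lambda>z. nstep w beta z ue) ^^ t) xs) ! j)) [0..<length xs]"

definition prefixes :: "real list set \<Rightarrow> nat \<Rightarrow> real list set" where
  "prefixes X i = (\<lambda>z. take i z) ` X"

definition list_continuous :: "nat \<Rightarrow> (real list \<Rightarrow> real) \<Rightarrow> bool" where
  "list_continuous k g \<longleftrightarrow> (\<forall>xs X. length xs = k \<longrightarrow> (\<forall>t. length (X t) = k) \<longrightarrow>
      (\<forall>j<k. (\<lambda>t. X t ! j) \<longlonglongrightarrow> xs ! j) \<longrightarrow> (\<lambda>t. g (X t)) \<longlonglongrightarrow> g xs)"

text \<open>The relation \<sim> on Xi = X'_[i]: the smallest equivalence relation containing \<sim>_e
  and closed under the congruence rule.\<close>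
inductive_set simrel :: "(nat \<Rightarrow> real) \<Rightarrow> (nat \<Rightarrow> 'u \<Rightarrow> real list \<Rightarrow> real) \<Rightarrow> 'u set \<Rightarrow> ('u \<Rightarrow> 's)
    \<Rightarrow> 'u \<Rightarrow> real list set \<Rightarrow> (real list \<times> real list) set"
  for w beta U lam ue Xi where
  base: "x \<in> Xi \<Longrightarrow> y \<in> Xi \<Longrightarrow> Sstar w beta ue x = Sstar w beta ue y \<Longrightarrow> (x, y) \<in> simrel w beta U lam ue Xi"
| sym: "(x, y) \<in> simrel w beta U lam ue Xi \<Longrightarrow> (y, x) \<in> simrel w beta U lam ue Xi"
| trans: "(x, y) \<in> simrel w beta U lam ue Xi \<Longrightarrow> (y, z) \<in> simrel w beta U lam ue Xi \<Longrightarrow> (x, z) \<in> simrel w beta U lam ue Xi"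
| cong: "(x, y) \<in> simrel w beta U lam ue Xi \<Longrightarrow> u \<in> U \<Longrightarrow> v \<in> U \<Longrightarrow> lam u = lam v \<Longrightarrow>
         (nstep w beta x u, nstep w beta y v) \<in> simrel w beta U lam ue Xi"

definition gfun :: "real \<Rightarrow> real \<Rightarrow> real \<Rightarrow> real" where
  "gfun w v x = x - tanh (w * x + v)"

definition is_loc_max :: "(real \<Rightarrow> real) \<Rightarrow> real \<Rightarrow> bool" where
  "is_loc_max f p \<longleftrightarrow> (\<exists>e>0. \<forall>y. \<bar>y - p\<bar> < e \<longrightarrow> f y \<le> f p)"

definition is_loc_min :: "(real \<Rightarrow> real) \<Rightarrow> real \<Rightarrow> bool" where
  "is_loc_min f p \<longleftrightarrow> (\<exists>e>0. \<forall>y. \<bar>y - p\<bar> < e \<longrightarrow> f p \<le> f y)"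

definition pm_v :: "real \<Rightarrow> real \<Rightarrow> real" where
  "pm_v w v = (THE p. is_loc_max (gfun w v) p)"

definition pp_v :: "real \<Rightarrow> real \<Rightarrow> real" where
  "pp_v w v = (THE p. is_loc_min (gfun w v) p)"

definition p_minus :: "real \<Rightarrow> real" where
  "p_minus w = pm_v w (THE v. gfun w v (pm_v w v) = 0)"

definition p_plus :: "real \<Rightarrow> real" where
  "p_plus w = pp_v w (THE v. gfun w v (pp_v w v) = 0)"

text \<open>kappa; k is the arbitrary map used for neurons with w j \<le> 1.\<close>
definition kappa :: "(nat \<Rightarrow> real) \<Rightarrow> (nat \<Rightarrow> real \<Rightarrow> nat) \<Rightarrow> nat \<Rightarrow> real \<Rightarrow> nat" where
  "kappa w k j x = (if 1 < w j then
      (if x \<le> p_minus (w j) then 1 else if x < p_plus (w j) then 2 else 3)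
    else k j x)"

definition etabar :: "(nat \<Rightarrow> real) \<Rightarrow> (nat \<Rightarrow> 'u \<Rightarrow> real list \<Rightarrow> real) \<Rightarrow> 'u \<Rightarrow> (nat \<Rightarrow> real \<Rightarrow> nat)
    \<Rightarrow> real list \<Rightarrow> nat list" where
  "etabar w beta ue k xs = map (\<lambda>j. kappa w k j (Sstar w beta ue xs ! j)) [0..<length xs]"

text \<open>Min w.r.t. the lexicographic order on lists (HOL-Library.List_Lexorder).\<close>
definition rhobar :: "(nat \<Rightarrow> real) \<Rightarrow> (nat \<Rightarrow> 'u \<Rightarrow> real list \<Rightarrow> real) \<Rightarrow> 'u set \<Rightarrow> ('u \<Rightarrow> 's)
    \<Rightarrow> 'u \<Rightarrow> (nat \<Rightarrow> real \<Rightarrow> nat) \<Rightarrow> real list set \<Rightarrow> real list \<Rightarrow> nat list" where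
  "rhobar w beta U lam ue k Xi x = Min (etabar w beta ue k ` {y. (x, y) \<in> simrel w beta U lam ue Xi})"

end

theory Submission imports Defs begin
lemma g_deriv: "DERIV (\<lambda>x. x - tanh (w*x+v)) x :> 1 - w * (1 - tanh (w*x+v)^2)" for w v x :: real
  by (rule derivative_eq_intros refl | simp add: algebra_simps)+

lemma two_fixed:
  fixes w b x y :: real
  assumes "x < y" "tanh (w*x+b) = x" "tanh (w*y+b) = y"
  shows "\<exists>\<xi>. x < \<xi> \<and> \<xi> < y \<and> w*(1 - tanh(w*\<xi>+b)^2) = 1"
proof -
  obtain \<xi> where "x<\<xi>" "\<xi><y" and eq: "(y - tanh(w*y+b)) - (x - tanh(w*x+b)) = (y-x)*(1 - w*(1 - tanh(w*\<xi>+b)^2))"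
    using MVT2[of x y "\<lambda>z. z - tanh(w*z+b)" "\<lambda>z. 1 - w*(1 - tanh(w*z+b)^2)"] g_deriv assms(1) by blast
  from eq assms have "(y-x)*(1 - w*(1 - tanh(w*\<xi>+b)^2)) = 0" by simp
  with assms(1) have "1 - w*(1 - tanh(w*\<xi>+b)^2) = 0" by simp
  with \<open>x<\<xi>\<close> \<open>\<xi><y\<close> show ?thesis by auto
qed

lemma four_fixed:
  fixes w b z1 z2 z3 z4 :: real
  assumes "z1 < z2" "z2 < z3" "z3 < z4"
    "tanh (w*z1+b) = z1" "tanh (w*z2+b) = z2" "tanh (w*z3+b) = z3" "tanh (w*z4+b) = z4"
  shows False
proof -
  obtain a1 where a1: "z1 < a1" "a1 < z2" "w*(1 - tanh(w*a1+b)^2) = 1" using two_fixed[of z1 z2 w b] assms by blast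
  obtain a2 where a2: "z2 < a2" "a2 < z3" "w*(1 - tanh(w*a2+b)^2) = 1" using two_fixed[of z2 z3 w b] assms by blast
  obtain a3 where a3: "z3 < a3" "a3 < z4" "w*(1 - tanh(w*a3+b)^2) = 1" using two_fixed[of z3 z4 w b] assms by blast
  have "w \<noteq> 0" using a1 by auto
  have "w > 0"
  proof -
    have "tanh(w*a1+b)^2 < 1" using tanh_real_bounds[of "w*a1+b"]
      by (simp add: abs_square_less_1 abs_less_iff)
    then have "1 - tanh(w*a1+b)^2 > 0" by simp
    with a1(3) show ?thesis by (metis zero_less_mult_pos2 zero_less_one)
  qed
  have l1: "tanh(w*a1+b) < tanh(w*a2+b)" using \<open>w>0\<close> a1 a2 by simp
  have l2: "tanh(w*a2+b) < tanh(w*a3+b)" using \<open>w>0\<close> a3 a2 by simp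
  have s1: "tanh(w*a1+b)^2 = tanh(w*a2+b)^2" using a1(3) a2(3) \<open>w \<noteq> 0\<close> by (metis mult_cancel_left right_minus_eq diff_left_imp_eq)
  have s2: "tanh(w*a3+b)^2 = tanh(w*a2+b)^2" using a3(3) a2(3) \<open>w \<noteq> 0\<close> by (metis mult_cancel_left diff_left_imp_eq)
  from s1 l1 have "tanh(w*a1+b) = - tanh(w*a2+b)" by (metis power2_eq_iff less_irrefl)
  moreover from s2 l2 have "tanh(w*a3+b) = - tanh(w*a2+b)" by (metis power2_eq_iff less_irrefl)
  ultimately show False using l1 l2 by simp
qed

lemma nonfixed_exists:
  fixes w b p q :: real
  assumes "p < q"
  shows "\<exists>z. p < z \<and> z < q \<and> tanh (w*z+b) \<noteq> z"
proof (rule ccontr)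
  assume "\<not> ?thesis"
  then have h: "\<And>z. p < z \<Longrightarrow> z < q \<Longrightarrow> tanh (w*z+b) = z" by blast
  let ?d = "(q - p)/5"
  have "?d > 0" using assms by simp
  have H: "tanh (w*(p+k*?d)+b) = p+k*?d" if "0<k" "k<5" for k :: real
  proof (rule h)
    have "k*?d < 5*?d" by (rule mult_strict_right_mono[OF that(2) \<open>?d>0\<close>])
    moreover have "5*?d = q - p" by simp
    ultimately show "p + k*?d < q" by linarith
    have "0 < k*?d" by (rule mult_pos_pos[OF that(1) \<open>?d>0\<close>])
    then show "p < p + k*?d" by linarith
  qed
  have i1: "p+1*?d < p+2*?d" "p+2*?d < p+3*?d" "p+3*?d < p+4*?d" using \<open>?d>0\<close> by linarith+
  show False
    by (rule four_fixed[OF i1 H[of 1] H[of 2] H[of 3] H[of 4]]) simp_all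
qed

lemma tanh_lip:
  fixes a a' :: real
  assumes "a' \<le> a"
  shows "tanh a - tanh a' \<le> a - a'"
proof -
  have "a' - tanh a' \<le> a - tanh a"
    apply (rule DERIV_nonneg_imp_nondecreasing[OF assms])
    apply (rule exI[of _ "tanh _ ^2"])
    by (auto intro!: derivative_eq_intros)
  then show ?thesis by simp
qed

lemma side_up:
  fixes w b0 z :: real and b x :: "nat \<Rightarrow> real"
  assumes "w \<ge> 0" "b \<longlonglongrightarrow> b0" "\<And>t. x (Suc t) = tanh (w * x t + b t)" "tanh (w*z + b0) > z"
  shows "eventually (\<lambda>t. x t > z) sequentially \<or> eventually (\<lambda>t. x t < z) sequentially"
proof -
  define \<delta> where "\<delta> = tanh (w*z+b0) - z"
  have "\<delta> > 0" using assms(4) \<delta>_def by simp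
  have "eventually (\<lambda>t. b t > b0 - \<delta>) sequentially"
    using order_tendstoD(1)[OF assms(2)] \<open>\<delta>>0\<close> by simp
  then obtain T where T: "\<And>t. t \<ge> T \<Longrightarrow> b t > b0 - \<delta>" by (auto simp: eventually_sequentially)
  have step: "x (Suc t) > z" if "t \<ge> T" "x t \<ge> z" for t
  proof -
    have "w * z \<le> w * x t" using that assms(1) by (simp add: mult_left_mono)
    then have "tanh (w * z + b t) \<le> tanh (w * x t + b t)" by simp
    moreover have "tanh (w*z+b t) > z"
    proof (cases "b t \<ge> b0")
      case True then have "tanh(w*z+b0) \<le> tanh(w*z+b t)" by simp
      then show ?thesis using \<open>\<delta>>0\<close> \<delta>_def by linarith
    next
      case False
      have "tanh(w*z+b0) - tanh(w*z+b t) \<le> (w*z+b0) - (w*z+b t)"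
        by (rule tanh_lip) (use False in simp)
      then show ?thesis using T[OF that(1)] \<delta>_def by linarith
    qed
    ultimately show ?thesis using assms(3)[of t] by linarith
  qed
  show ?thesis
  proof (cases "\<exists>t\<ge>T. x t \<ge> z")
    case True
    then obtain t0 where t0: "t0 \<ge> T" "x t0 \<ge> z" by auto
    have "x s > z" if "s \<ge> Suc t0" for s
      using that
    proof (induction s rule: dec_induct)
      case base
      then show ?case using step t0 by blast
    next
      case (step s)
      then show ?case using \<open>\<And>t. t \<ge> T \<Longrightarrow> x t \<ge> z \<Longrightarrow> x (Suc t) > z\<close> t0 by simp
    qed
    then show ?thesis unfolding eventually_sequentially by blast
  next
    case False
    then have "\<forall>t\<ge>T. x t < z" by auto
    then show ?thesis unfolding eventually_sequentially by blast
  qed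
qed

lemma side_any:
  fixes w b0 z :: real and b x :: "nat \<Rightarrow> real"
  assumes "w \<ge> 0" "b \<longlonglongrightarrow> b0" "\<And>t. x (Suc t) = tanh (w * x t + b t)" "tanh (w*z + b0) \<noteq> z"
  shows "eventually (\<lambda>t. x t > z) sequentially \<or> eventually (\<lambda>t. x t < z) sequentially"
proof (cases "tanh (w*z + b0) > z")
  case True
  then show ?thesis using side_up[OF assms(1-3)] by blast
next
  case False
  then have lt: "tanh (w*z + b0) < z" using assms(4) by linarith
  have b': "(\<lambda>t. - b t) \<longlonglongrightarrow> - b0" using assms(2) by (rule tendsto_minus)
  have x': "- x (Suc t) = tanh (w * (- x t) + (- b t))" for t
    using assms(3)[of t] by (simp flip: tanh_minus add: algebra_simps)
  have e: "w*(-z) + (-b0) = -(w*z+b0)" by simp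
  have "tanh (w*(-z) + (-b0)) = - tanh (w*z+b0)" by (simp only: e tanh_minus)
  then have z': "tanh (w*(-z) + (-b0)) > -z" using lt by linarith
  have "eventually (\<lambda>t. - x t > -z) sequentially \<or> eventually (\<lambda>t. - x t < -z) sequentially"
    by (rule side_up[where x="\<lambda>t. - x t", OF assms(1) b' x' z'])
  then show ?thesis by auto
qed

lemma conv:
  fixes w b0 :: real and b x :: "nat \<Rightarrow> real"
  assumes "w \<ge> 0" "b \<longlonglongrightarrow> b0" "\<And>t. x (Suc t) = tanh (w * x t + b t)"
  shows "x \<longlonglongrightarrow> lim x \<and> lim x = tanh (w * lim x + b0)"
proof -
  define A where "A = {z. eventually (\<lambda>t. z < x t) sequentially}"
  have evb: "eventually (\<lambda>t. -1 < x t \<and> x t < 1) sequentially"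
    unfolding eventually_sequentially
  proof (intro exI[of _ 1] allI impI)
    fix n :: nat assume "1 \<le> n"
    then obtain m where m: "n = Suc m" by (cases n) auto
    show "-1 < x n \<and> x n < 1" unfolding m assms(3) using tanh_real_lt_1 tanh_real_gt_neg1 by blast
  qed
  have "-2 \<in> A" unfolding A_def mem_Collect_eq by (rule eventually_mono[OF evb]) auto
  then have ne: "A \<noteq> {}" by blast
  have ub: "z \<le> 1" if "z \<in> A" for z
  proof -
    have "eventually (\<lambda>t. (-1 < x t \<and> x t < 1) \<and> z < x t) sequentially"
      using evb that unfolding A_def mem_Collect_eq by (rule eventually_conj)
    then obtain N where "\<forall>n\<ge>N. (-1 < x n \<and> x n < 1) \<and> z < x n" unfolding eventually_sequentially by blast
    then have "z < x N \<and> x N < 1" by blast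
    then show ?thesis by linarith
  qed
  then have bdd: "bdd_above A" by (rule bdd_aboveI)
  define L where "L = Sup A"
  have tl: "x \<longlonglongrightarrow> L"
  proof (rule order_tendstoI)
    fix a assume "a < L"
    then have "\<exists>z\<in>A. a < z" using less_cSup_iff[OF ne bdd] unfolding L_def by blast
    then obtain z where "z \<in> A" "a < z" by blast
    then have "eventually (\<lambda>t. z < x t) sequentially" unfolding A_def by blast
    then show "eventually (\<lambda>t. a < x t) sequentially"
      by (rule eventually_mono) (use \<open>a < z\<close> in linarith)
  next
    fix a assume "L < a"
    obtain z where z: "L < z" "z < a" "tanh (w*z+b0) \<noteq> z" using nonfixed_exists[OF \<open>L<a\<close>] by blast
    have "z \<notin> A"
    proof
      assume "z \<in> A"
      then have "z \<le> L" unfolding L_def by (rule cSup_upper[OF _ bdd])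
      then show False using z(1) by linarith
    qed
    then have "\<not> eventually (\<lambda>t. z < x t) sequentially" unfolding A_def by blast
    then have "eventually (\<lambda>t. x t < z) sequentially"
      using side_any[OF assms z(3)] by blast
    then show "eventually (\<lambda>t. x t < a) sequentially" by (rule eventually_mono) (use z in linarith)
  qed
  have l1: "(\<lambda>t. x (Suc t)) \<longlonglongrightarrow> L" using tl by (rule LIMSEQ_Suc)
  have "(\<lambda>t. w * x t + b t) \<longlonglongrightarrow> w * L + b0" by (intro tendsto_add tendsto_mult tendsto_const tl assms(2))
  then have l2: "(\<lambda>t. tanh (w * x t + b t)) \<longlonglongrightarrow> tanh (w * L + b0)"
    by (rule tendsto_tanh[OF _ cosh_real_pos[THEN less_imp_neq, THEN not_sym]])
  have eqf: "(\<lambda>t. x (Suc t)) = (\<lambda>t. tanh (w * x t + b t))" by (rule ext) (rule assms(3))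
  have l2': "(\<lambda>t. x (Suc t)) \<longlonglongrightarrow> tanh (w * L + b0)" unfolding eqf by (rule l2)
  have "L = tanh (w * L + b0)" by (rule LIMSEQ_unique[OF l1 l2'])
  moreover have "lim x = L" using tl by (rule limI)
  ultimately show ?thesis using tl by (simp only:)
qed
lemma tanh_artanh:
  fixes x :: real assumes "-1 < x" "x < 1" shows "tanh (artanh x) = x"
proof -
  have q: "(1 + x) / (1 - x) > 0" using assms by simp
  have E: "exp (- 2 * artanh x) = (1 - x) / (1 + x)"
    unfolding artanh_def using q by (simp add: exp_minus exp_ln)
  have "tanh (artanh x) = (1 - (1-x)/(1+x)) / (1 + (1-x)/(1+x))" by (simp only: tanh_real_altdef E)
  also have "\<dots> = x" using assms by (simp add: field_simps)
  finally show ?thesis .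
qed

lemma g_cont: "continuous_on {a..b} (\<lambda>x. x - tanh (w*x+v))" for w v a b :: real
  by (rule DERIV_atLeastAtMost_imp_continuous_on) (use g_deriv in blast)

lemma g_inc:
  fixes w v c x y :: real
  assumes "x < y" "c\<^sup>2 = 1 - 1/w" "w > 0" "\<And>z. x < z \<Longrightarrow> z < y \<Longrightarrow> c\<^sup>2 < tanh (w*z+v)^2"
  shows "x - tanh (w*x+v) < y - tanh (w*y+v)"
proof (rule DERIV_pos_imp_increasing_open[OF assms(1) _ g_cont])
  fix z assume "x < z" "z < y"
  have "w * c\<^sup>2 < w * tanh (w*z+v)^2" using assms(3) assms(4)[OF \<open>x<z\<close> \<open>z<y\<close>] by simp
  moreover have "w * c\<^sup>2 = w - 1" using assms(2,3) by (simp add: field_simps)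
  ultimately have "1 - w * (1 - tanh (w*z+v)^2) > 0" by (simp add: algebra_simps)
  then show "\<exists>y. DERIV (\<lambda>x. x - tanh (w*x+v)) z :> y \<and> y > 0" using g_deriv by blast
qed

lemma g_dec:
  fixes w v c x y :: real
  assumes "x < y" "c\<^sup>2 = 1 - 1/w" "w > 0" "\<And>z. x < z \<Longrightarrow> z < y \<Longrightarrow> tanh (w*z+v)^2 < c\<^sup>2"
  shows "x - tanh (w*x+v) > y - tanh (w*y+v)"
proof (rule DERIV_neg_imp_decreasing_open[OF assms(1) _ g_cont])
  fix z assume "x < z" "z < y"
  have "w * c\<^sup>2 > w * tanh (w*z+v)^2" using assms(3) assms(4)[OF \<open>x<z\<close> \<open>z<y\<close>] by simp
  moreover have "w * c\<^sup>2 = w - 1" using assms(2,3) by (simp add: field_simps)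
  ultimately have "1 - w * (1 - tanh (w*z+v)^2) < 0" by (simp add: algebra_simps)
  then show "\<exists>y. DERIV (\<lambda>x. x - tanh (w*x+v)) z :> y \<and> y < 0" using g_deriv by blast
qed

lemma sq_gt: "0 \<le> c \<Longrightarrow> c < \<bar>t\<bar> \<Longrightarrow> c\<^sup>2 < t\<^sup>2" for c t :: real
  by (metis power2_abs power_strict_mono zero_less_numeral)
lemma sq_lt: "\<bar>t\<bar> < c \<Longrightarrow> t\<^sup>2 < c\<^sup>2" for c t :: real
  by (metis abs_ge_zero power2_abs power_strict_mono zero_less_numeral)

lemma c_facts:
  fixes w :: real assumes "w > 1"
  shows "0 < sqrt (1 - 1/w)" "sqrt (1 - 1/w) < 1" "(sqrt (1 - 1/w))\<^sup>2 = 1 - 1/w"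
    "tanh (artanh (sqrt (1 - 1/w))) = sqrt (1 - 1/w)" "artanh (sqrt (1 - 1/w)) > 0"
proof -
  have h: "0 < 1 - 1/w" "1 - 1/w < 1" using assms by (simp_all add: field_simps)
  show 1: "0 < sqrt (1 - 1/w)" using h by simp
  show 2: "sqrt (1 - 1/w) < 1" using h by (metis real_sqrt_less_iff real_sqrt_one)
  show "(sqrt (1 - 1/w))\<^sup>2 = 1 - 1/w" using h by simp
  show 4: "tanh (artanh (sqrt (1 - 1/w))) = sqrt (1 - 1/w)" using 1 2 by (intro tanh_artanh) linarith+
  show "artanh (sqrt (1 - 1/w)) > 0" using 1 4 by (metis tanh_real_pos_iff)
qed

lemma loc_max_iff:
  fixes w v :: real assumes "w > 1"
  shows "is_loc_max (gfun w v) p \<longleftrightarrow> p = (- artanh (sqrt (1 - 1/w)) - v)/w"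
proof -
  define c where "c = sqrt (1 - 1/w)"
  define a where "a = artanh c"
  define p0 where "p0 = (- a - v)/w"
  have w0: "w > 0" using assms by simp
  have c0: "0 < c" and c1: "c < 1" and c2: "c\<^sup>2 = 1 - 1/w" and ta: "tanh a = c" and a0: "a > 0"
    using c_facts[OF assms] unfolding c_def a_def by auto
  have wp0: "w * p0 + v = -a" unfolding p0_def using w0 by (simp add: field_simps)
  have max0: "is_loc_max (gfun w v) p0"
    unfolding is_loc_max_def
  proof (intro exI[of _ "2*a/w"] conjI allI impI)
    show "0 < 2*a/w" using a0 w0 by simp
    fix y assume y: "\<bar>y - p0\<bar> < 2*a/w"
    consider "y < p0" | "y = p0" | "y > p0" by linarith
    then show "gfun w v y \<le> gfun w v p0"
    proof cases
      case 1
      have "y - tanh (w*y+v) < p0 - tanh (w*p0+v)"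
      proof (rule g_inc[OF 1 c2 w0])
        fix z assume "y < z" "z < p0"
        then have "w*z+v < -a" using wp0 w0 by (smt (verit) mult_strict_left_mono)
        then have "tanh (w*z+v) < -c" using ta by (metis tanh_minus tanh_real_less_iff)
        then show "c\<^sup>2 < tanh (w*z+v)^2" using c0 by (intro sq_gt) auto
      qed
      then show ?thesis unfolding gfun_def by simp
    next
      case 2 then show ?thesis by simp
    next
      case 3
      have "y < p0 + 2*a/w" using y by linarith
      then have wy: "w*y + v < a" using wp0 w0 by (simp add: field_simps)
      have "y - tanh (w*y+v) < p0 - tanh (w*p0+v)"
      proof (rule g_dec[OF 3 c2 w0])
        fix z assume "p0 < z" "z < y"
        then have "-a < w*z+v" "w*z+v < a" using wp0 wy w0 by (smt (verit) mult_strict_left_mono)+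
        then have "-c < tanh (w*z+v)" "tanh (w*z+v) < c" using ta by (metis tanh_minus tanh_real_less_iff)+
        then show "tanh (w*z+v)^2 < c\<^sup>2" by (intro sq_lt) auto
      qed
      then show ?thesis unfolding gfun_def by simp
    qed
  qed
  have uniq: "p = p0" if lm: "is_loc_max (gfun w v) p" for p
  proof -
    obtain e where e: "e > 0" "\<And>y. \<bar>y - p\<bar> < e \<Longrightarrow> gfun w v y \<le> gfun w v p"
      using lm unfolding is_loc_max_def by blast
    have "1 - w * (1 - tanh (w*p+v)^2) = 0"
      by (rule DERIV_local_max[OF g_deriv e(1)]) (use e(2) in \<open>auto simp: gfun_def abs_minus_commute\<close>)
    then have A: "1 + w * tanh (w*p+v)^2 = w" by (simp add: algebra_simps)
    have B: "1 + w * c\<^sup>2 = w" using c2 w0 by (simp add: field_simps)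
    from A B have "w * tanh (w*p+v)^2 = w * c\<^sup>2" by linarith
    then have "tanh (w*p+v)^2 = c\<^sup>2" using w0 by simp
    then have "tanh (w*p+v) = c \<or> tanh (w*p+v) = -c" by (simp add: power2_eq_iff)
    then show ?thesis
    proof
      assume tc: "tanh (w*p+v) = c"
      then have "tanh (w*p+v) = tanh a" using ta by simp
      then have wp: "w*p+v = a" by (simp only: tanh_real_eq_iff)
      define y where "y = p + e/2"
      have "p < y" "\<bar>y - p\<bar> < e" using e(1) unfolding y_def by auto
      have "p - tanh (w*p+v) < y - tanh (w*y+v)"
      proof (rule g_inc[OF \<open>p<y\<close> c2 w0])
        fix z assume "p < z" "z < y"
        then have "a < w*z+v" using wp w0 by (smt (verit) mult_strict_left_mono)
        then have "c < tanh (w*z+v)" using ta by (metis tanh_real_less_iff)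
        then show "c\<^sup>2 < tanh (w*z+v)^2" using c0 by (intro sq_gt) auto
      qed
      moreover have "gfun w v y \<le> gfun w v p" using e(2) \<open>\<bar>y - p\<bar> < e\<close> by blast
      ultimately show ?thesis unfolding gfun_def by simp
    next
      assume "tanh (w*p+v) = -c"
      then have "w*p+v = -a" using ta by (metis tanh_minus tanh_real_eq_iff)
      then show ?thesis unfolding p0_def using w0 by (simp add: field_simps)
    qed
  qed
  have "is_loc_max (gfun w v) p \<longleftrightarrow> p = p0" using max0 uniq by blast
  then show ?thesis unfolding p0_def a_def c_def .
qed

lemma pm_v_eq:
  fixes w v :: real assumes "w > 1"
  shows "pm_v w v = (- artanh (sqrt (1 - 1/w)) - v)/w"
  unfolding pm_v_def loc_max_iff[OF assms] by simp

lemma gfun_sym: "gfun w v y = - gfun w (-v) (-y)"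
proof -
  have "w*(-y) + -v = -(w*y+v)" by simp
  then show ?thesis unfolding gfun_def by (simp only: tanh_minus)
qed

lemma loc_min_sym: "is_loc_min (gfun w v) p \<longleftrightarrow> is_loc_max (gfun w (-v)) (-p)"
proof
  assume "is_loc_min (gfun w v) p"
  then obtain e where e: "e > 0" "\<And>y. \<bar>y - p\<bar> < e \<Longrightarrow> gfun w v p \<le> gfun w v y"
    unfolding is_loc_min_def by blast
  show "is_loc_max (gfun w (-v)) (-p)" unfolding is_loc_max_def
  proof (intro exI[of _ e] conjI allI impI)
    fix y assume "\<bar>y - - p\<bar> < e"
    then have "\<bar>(-y) - p\<bar> < e" by simp
    then have "gfun w v p \<le> gfun w v (-y)" by (rule e(2))
    then show "gfun w (-v) y \<le> gfun w (-v) (-p)" unfolding gfun_sym[of w v] by simp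
  qed (rule e(1))
next
  assume "is_loc_max (gfun w (-v)) (-p)"
  then obtain e where e: "e > 0" "\<And>y. \<bar>y - - p\<bar> < e \<Longrightarrow> gfun w (-v) y \<le> gfun w (-v) (-p)"
    unfolding is_loc_max_def by blast
  show "is_loc_min (gfun w v) p" unfolding is_loc_min_def
  proof (intro exI[of _ e] conjI allI impI)
    fix y assume "\<bar>y - p\<bar> < e"
    then have "\<bar>(-y) - - p\<bar> < e" by simp
    then have "gfun w (-v) (-y) \<le> gfun w (-v) (-p)" by (rule e(2))
    then show "gfun w v p \<le> gfun w v y" unfolding gfun_sym[of w v] by simp
  qed (rule e(1))
qed

lemma pp_v_eq:
  fixes w v :: real assumes "w > 1"
  shows "pp_v w v = (artanh (sqrt (1 - 1/w)) - v)/w"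
proof -
  have H: "is_loc_min (gfun w v) p \<longleftrightarrow> p = (artanh (sqrt (1 - 1/w)) - v)/w" for p
    unfolding loc_min_sym loc_max_iff[OF assms] using assms by (auto simp: field_simps)
  show ?thesis unfolding pp_v_def by (rule the_equality) (use H in auto)
qed

lemma p_minus_eq:
  fixes w :: real assumes "w > 1"
  shows "p_minus w = - sqrt (1 - 1/w)"
proof -
  define c where "c = sqrt (1 - 1/w)"
  define a where "a = artanh c"
  have w0: "w > 0" using assms by simp
  have ta: "tanh a = c" using c_facts[OF assms] unfolding c_def a_def by auto
  have e1: "w * ((- a - v) / w) + v = - a" for v using w0 by (simp add: field_simps)
  have "gfun w v (pm_v w v) = 0 \<longleftrightarrow> v = w*c - a" for v
    unfolding pm_v_eq[OF assms] gfun_def a_def[symmetric] c_def[symmetric] e1 tanh_minus ta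
    using w0 by (auto simp: field_simps)
  then have "(THE v. gfun w v (pm_v w v) = 0) = w*c - a" by simp
  then show ?thesis unfolding p_minus_def pm_v_eq[OF assms] a_def[symmetric] c_def[symmetric]
    using w0 by (simp add: field_simps)
qed

lemma p_plus_eq:
  fixes w :: real assumes "w > 1"
  shows "p_plus w = sqrt (1 - 1/w)"
proof -
  define c where "c = sqrt (1 - 1/w)"
  define a where "a = artanh c"
  have w0: "w > 0" using assms by simp
  have ta: "tanh a = c" using c_facts[OF assms] unfolding c_def a_def by auto
  have e1: "w * ((a - v) / w) + v = a" for v using w0 by (simp add: field_simps)
  have "gfun w v (pp_v w v) = 0 \<longleftrightarrow> v = a - w*c" for v
    unfolding pp_v_eq[OF assms] gfun_def a_def[symmetric] c_def[symmetric] e1 ta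
    using w0 by (auto simp: field_simps)
  then have "(THE v. gfun w v (pp_v w v) = 0) = a - w*c" by simp
  then show ?thesis unfolding p_plus_def pp_v_eq[OF assms] a_def[symmetric] c_def[symmetric]
    using w0 by (simp add: field_simps)
qed

lemma g_mono_small:
  fixes w b x y :: real
  assumes "0 \<le> w" "w \<le> 1" "x \<le> y"
  shows "x - tanh (w*x+b) \<le> y - tanh (w*y+b)"
proof (rule DERIV_nonneg_imp_nondecreasing[OF assms(3)])
  fix z :: real
  have "tanh (w*z+b)^2 < 1" using tanh_real_bounds[of "w*z+b"]
    by (simp add: abs_square_less_1 abs_less_iff)
  then have h: "0 \<le> 1 - tanh (w*z+b)^2" "1 - tanh (w*z+b)^2 \<le> 1" by simp_all
  have "w * (1 - tanh (w*z+b)^2) \<le> w * 1" by (rule mult_left_mono[OF h(2) assms(1)])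
  then have "1 - w * (1 - tanh (w*z+b)^2) \<ge> 0" using assms(2) by simp
  then show "\<exists>y. DERIV (\<lambda>x. x - tanh (w*x+b)) z :> y \<and> y \<ge> 0" using g_deriv by blast
qed

lemma fixed_unique_small_lt:
  fixes w b x y :: real
  assumes "0 \<le> w" "w \<le> 1" "x < y" "tanh (w*x+b) = x" "tanh (w*y+b) = y"
  shows False
proof -
  have H: "tanh (w*z+b) = z" if "x \<le> z" "z \<le> y" for z
  proof -
    have "x - tanh (w*x+b) \<le> z - tanh (w*z+b)" by (rule g_mono_small[OF assms(1,2) that(1)])
    moreover have "z - tanh (w*z+b) \<le> y - tanh (w*y+b)" by (rule g_mono_small[OF assms(1,2) that(2)])
    ultimately show ?thesis using assms(4,5) by linarith
  qed
  define d where "d = (y - x)/3"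
  have d: "d > 0" "x + 3*d = y" using assms(3) unfolding d_def by (simp_all add: field_simps)
  show False
    by (rule four_fixed[of x "x+d" "x+2*d" y w b]) (use d in \<open>auto intro!: H\<close>)
qed

lemma fixed_unique_small:
  fixes w b x y :: real
  assumes "0 \<le> w" "w \<le> 1" "tanh (w*x+b) = x" "tanh (w*y+b) = y"
  shows "x = y"
  using fixed_unique_small_lt[OF assms(1,2) _ assms(3,4)] fixed_unique_small_lt[OF assms(1,2) _ assms(4,3)]
  by (meson linorder_neqE_linordered_idom)

lemma fixed_unique_big_lt:
  fixes w b x y :: real
  assumes "1 < w" "x < y" "tanh (w*x+b) = x" "tanh (w*y+b) = y"
    "(y \<le> - sqrt (1 - 1/w)) \<or> (- sqrt (1 - 1/w) < x \<and> y < sqrt (1 - 1/w)) \<or> (sqrt (1 - 1/w) \<le> x)"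
  shows False
proof -
  define c where "c = sqrt (1 - 1/w)"
  have c0: "0 < c" and c2: "c\<^sup>2 = 1 - 1/w" using c_facts[OF assms(1)] unfolding c_def by auto
  have w0: "w > 0" using assms(1) by simp
  obtain \<xi> where xi: "x < \<xi>" "\<xi> < y" "w*(1 - tanh(w*\<xi>+b)^2) = 1" using two_fixed[OF assms(2-4)] by blast
  define t where "t = tanh(w*\<xi>+b)"
  have "x < t" unfolding t_def using xi(1) w0 assms(3) by (metis mult_strict_left_mono add_strict_right_mono tanh_real_less_iff)
  have "t < y" unfolding t_def using xi(2) w0 assms(4) by (metis mult_strict_left_mono add_strict_right_mono tanh_real_less_iff)
  have A: "1 + w * t^2 = w" using xi(3) unfolding t_def by (simp add: algebra_simps)
  have B: "1 + w * c\<^sup>2 = w" using c2 w0 by (simp add: field_simps)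
  from A B have "w * t^2 = w * c\<^sup>2" by linarith
  then have tc: "t^2 = c\<^sup>2" using w0 by simp
  from assms(5)[folded c_def] show False
  proof (elim disjE conjE)
    assume "y \<le> -c"
    then have "c < \<bar>t\<bar>" using \<open>t<y\<close> c0 by linarith
    then show False using sq_gt[of c t] c0 tc by simp
  next
    assume "-c < x" "y < c"
    then have "\<bar>t\<bar> < c" using \<open>t<y\<close> \<open>x<t\<close> by linarith
    then show False using sq_lt[of t c] tc by simp
  next
    assume "c \<le> x"
    then have "c < \<bar>t\<bar>" using \<open>x<t\<close> c0 by linarith
    then show False using sq_gt[of c t] c0 tc by simp
  qed
qed

lemma kappa_unique:
  fixes w :: "nat \<Rightarrow> real" and b x y :: real
  assumes "0 < w j" "tanh (w j*x+b) = x" "tanh (w j*y+b) = y" "kappa w k j x = kappa w k j y"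
  shows "x = y"
proof (cases "1 < w j")
  case False
  then show ?thesis using fixed_unique_small[OF _ _ assms(2,3)] assms(1) by simp
next
  case True
  note pm = p_minus_eq[OF True] and pp = p_plus_eq[OF True]
  have reg: "x = y" if "x < y" "tanh (w j*x+b) = x" "tanh (w j*y+b) = y" "kappa w k j x = kappa w k j y" for x y
  proof (rule ccontr)
    have c0: "0 < sqrt (1 - 1/w j)" using c_facts[OF True] by simp
    have "(y \<le> - sqrt (1 - 1/w j)) \<or> (- sqrt (1 - 1/w j) < x \<and> y < sqrt (1 - 1/w j)) \<or> (sqrt (1 - 1/w j) \<le> x)"
      using that(1,4) True c0 unfolding kappa_def pm pp by (auto split: if_splits)
    then show False using fixed_unique_big_lt[OF True that(1-3)] by blast
  qed
  show ?thesis using reg[of x y] reg[of y x] assms(2-4) by (metis linorder_neqE_linordered_idom)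
qed

lemma nstep_length [simp]: "length (nstep w beta xs u) = length xs"
  by (simp add: nstep_def)

lemma nstep_nth: "j < length xs \<Longrightarrow> nstep w beta xs u ! j = tanh (w j * xs ! j + beta j u (take j xs))"
  by (simp add: nstep_def)

lemma nstep_take: "take i (nstep w beta xs u) = nstep w beta (take i xs) u"
  by (rule nth_equalityI) (auto simp: nstep_nth)

lemma iter_length [simp]: "length (((\<lambda>z. nstep w beta z u) ^^ t) x) = length x"
  by (induction t) auto

lemma Sstar_length [simp]: "length (Sstar w beta ue x) = length x"
  by (simp add: Sstar_def)

lemma Sstar_props:
  fixes w :: "nat \<Rightarrow> real" and beta :: "nat \<Rightarrow> 'u \<Rightarrow> real list \<Rightarrow> real"
  assumes "\<forall>j<length x. 0 < w j" "\<forall>j<length x. list_continuous j (beta j ue)"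
  shows "j < length x \<Longrightarrow> (\<lambda>t. (((\<lambda>z. nstep w beta z ue) ^^ t) x) ! j) \<longlonglongrightarrow> Sstar w beta ue x ! j
      \<and> Sstar w beta ue x ! j = tanh (w j * (Sstar w beta ue x ! j) + beta j ue (take j (Sstar w beta ue x)))"
proof (induction j rule: less_induct)
  case (less j)
  define X where "X = (\<lambda>t. ((\<lambda>z. nstep w beta z ue) ^^ t) x)"
  define S where "S = Sstar w beta ue x"
  have lS: "length S = length x" unfolding S_def by simp
  have lX: "length (X t) = length x" for t unfolding X_def by simp
  have Sj: "S ! j' = lim (\<lambda>t. X t ! j')" if "j' < length x" for j'
    unfolding S_def X_def Sstar_def using that by simp
  have IH: "(\<lambda>t. X t ! j') \<longlonglongrightarrow> S ! j'" if "j' < j" for j'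
    using less.IH[OF that] less.prems that unfolding X_def S_def by auto
  have bconv: "(\<lambda>t. beta j ue (take j (X t))) \<longlonglongrightarrow> beta j ue (take j S)"
  proof -
    have lc: "list_continuous j (beta j ue)" using assms(2) less.prems by blast
    show ?thesis
      using lc unfolding list_continuous_def
      using lS lX less.prems IH by (auto simp: min_def)
  qed
  have rec: "X (Suc t) ! j = tanh (w j * X t ! j + beta j ue (take j (X t)))" for t
    unfolding X_def using less.prems by (simp add: nstep_nth)
  have w0: "0 \<le> w j" using assms(1) less.prems by (simp add: less_imp_le)
  have "(\<lambda>t. X t ! j) \<longlonglongrightarrow> lim (\<lambda>t. X t ! j) \<and> lim (\<lambda>t. X t ! j) = tanh (w j * lim (\<lambda>t. X t ! j) + beta j ue (take j S))"
    by (rule conv[OF w0 bconv rec])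
  then show ?case using Sj[OF less.prems] unfolding X_def S_def by simp
qed

lemma fix_unique_list:
  fixes w :: "nat \<Rightarrow> real" and beta :: "nat \<Rightarrow> 'u \<Rightarrow> real list \<Rightarrow> real"
  assumes "length s = i" "length s' = i" "\<forall>j<i. 0 < w j"
   "\<forall>j<i. s!j = tanh (w j * s!j + beta j ue (take j s))"
   "\<forall>j<i. s'!j = tanh (w j * s'!j + beta j ue (take j s'))"
   "\<forall>j<i. kappa w k j (s!j) = kappa w k j (s'!j)"
  shows "s = s'"
proof -
  have "j \<le> i \<Longrightarrow> take j s = take j s'" for j
  proof (induction j)
    case 0 then show ?case by simp
  next
    case (Suc j)
    then have ji: "j < i" by simp
    have tj: "take j s = take j s'" using Suc by simp
    have "s!j = s'!j"
      apply (rule kappa_unique[of w j _ "beta j ue (take j s)" _ k])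
      using assms(3-6) ji tj by auto
    then show ?case using ji assms(1,2) tj by (simp add: take_Suc_conv_app_nth)
  qed
  from this[of i] assms(1,2) show ?thesis by simp
qed

lemma simrel_in:
  assumes "(x, y) \<in> simrel w beta U lam ue Xi" "\<forall>z\<in>Xi. \<forall>u\<in>U. nstep w beta z u \<in> Xi"
  shows "x \<in> Xi \<and> y \<in> Xi"
  using assms by (induction rule: simrel.induct) auto

lemma kappa_range: "\<forall>j r. k j r \<in> {1, 2, 3} \<Longrightarrow> kappa w k j x \<in> {1,2,3}"
  unfolding kappa_def by auto

lemma etabar_range:
  assumes "\<forall>j r. k j r \<in> {1, 2, 3}"
  shows "etabar w beta ue k z \<in> {l. set l \<subseteq> {1,2,3} \<and> length l = length z}"
proof -
  have "\<And>j x. kappa w k j x \<in> {1,2,3}" using kappa_range[OF assms] by blast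
  then show ?thesis unfolding etabar_def by (auto simp del: insert_iff)
qed


lemma prefix_closed:
  assumes "\<forall>z\<in>X'. \<forall>u\<in>U. nstep w beta z u \<in> X'"
  shows "\<forall>z\<in>prefixes X' i. \<forall>u\<in>U. nstep w beta z u \<in> prefixes X' i"
proof (intro ballI)
  fix z u assume "z \<in> prefixes X' i" "u \<in> U"
  then obtain z0 where z0: "z0 \<in> X'" "z = take i z0" unfolding prefixes_def by blast
  have "nstep w beta z u = take i (nstep w beta z0 u)" unfolding z0(2) by (simp add: nstep_take)
  then show "nstep w beta z u \<in> prefixes X' i" unfolding prefixes_def using assms z0(1) \<open>u\<in>U\<close> by blast
qed

theorem proposition11:
  fixes n i :: nat and w :: "nat \<Rightarrow> real" and beta :: "nat \<Rightarrow> 'u \<Rightarrow> real list \<Rightarrow> real"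
    and U :: "'u set" and X' :: "real list set" and lam :: "'u \<Rightarrow> 's" and ue :: 'u
    and k :: "nat \<Rightarrow> real \<Rightarrow> nat" and x y :: "real list"
  assumes "\<forall>j<n. 0 < w j"
    and "\<forall>j<n. \<forall>u\<in>U. list_continuous j (beta j u)"
    and "\<forall>j r. k j r \<in> {1, 2, 3}"
    and "\<forall>z\<in>X'. length z = n"
    and "\<forall>z\<in>X'. \<forall>u\<in>U. nstep w beta z u \<in> X'"
    and "ue \<in> U"
    and "1 \<le> i" and "i \<le> n"
    and "x \<in> prefixes X' i" and "y \<in> prefixes X' i"
    and "rhobar w beta U lam ue k (prefixes X' i) x = rhobar w beta U lam ue k (prefixes X' i) y"
  shows "(x, y) \<in> simrel w beta U lam ue (prefixes X' i)"
proof -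
  define Xi where "Xi = prefixes X' i"
  define R where "R = simrel w beta U lam ue Xi"
  have clo: "\<forall>z\<in>Xi. \<forall>u\<in>U. nstep w beta z u \<in> Xi" unfolding Xi_def by (rule prefix_closed[OF assms(5)])
  have len: "length z = i" if "z \<in> Xi" for z
    using that assms(4,8) unfolding Xi_def prefixes_def by auto
  have mem: "a \<in> Xi \<and> b \<in> Xi" if "(a, b) \<in> R" for a b
    using simrel_in[OF that[unfolded R_def] clo] .
  have minex: "\<exists>x'. (x0, x') \<in> R \<and> etabar w beta ue k x' = rhobar w beta U lam ue k Xi x0" if "x0 \<in> Xi" for x0
  proof -
    define C where "C = {z. (x0, z) \<in> R}"
    have "(x0, x0) \<in> R" unfolding R_def using that by (rule simrel.base) (use that in auto)
    then have ne: "etabar w beta ue k ` C \<noteq> {}" unfolding C_def by blast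
    have "etabar w beta ue k ` C \<subseteq> {l. set l \<subseteq> {1,2,3} \<and> length l = i}"
    proof
      fix l assume "l \<in> etabar w beta ue k ` C"
      then obtain z where z: "z \<in> C" "l = etabar w beta ue k z" by blast
      have "length z = i" using z(1) mem len unfolding C_def by blast
      then show "l \<in> {l. set l \<subseteq> {1,2,3} \<and> length l = i}" using etabar_range[OF assms(3)] z(2) by metis
    qed
    then have fin: "finite (etabar w beta ue k ` C)"
      by (rule finite_subset) (rule finite_lists_length_eq, simp)
    have "Min (etabar w beta ue k ` C) \<in> etabar w beta ue k ` C" by (rule Min_in[OF fin ne])
    then show ?thesis unfolding rhobar_def C_def R_def by auto
  qed
  obtain x' where x': "(x, x') \<in> R" "etabar w beta ue k x' = rhobar w beta U lam ue k Xi x"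
    using minex assms(9) unfolding Xi_def by blast
  obtain y' where y': "(y, y') \<in> R" "etabar w beta ue k y' = rhobar w beta U lam ue k Xi y"
    using minex assms(10) unfolding Xi_def by blast
  have x'X: "x' \<in> Xi" and y'X: "y' \<in> Xi" using mem x'(1) y'(1) by blast+
  have lx: "length x' = i" and ly: "length y' = i" using len x'X y'X by blast+
  have eq: "etabar w beta ue k x' = etabar w beta ue k y'" using x'(2) y'(2) assms(11) unfolding Xi_def by simp
  have wpos: "\<forall>j<i. 0 < w j" using assms(1,8) by simp
  have lc: "\<forall>j<i. list_continuous j (beta j ue)" using assms(2,6,8) by simp
  have Sx: "\<forall>j<i. Sstar w beta ue x' ! j = tanh (w j * (Sstar w beta ue x' ! j) + beta j ue (take j (Sstar w beta ue x')))"
    using Sstar_props[of x' w beta ue] wpos lc lx by simp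
  have Sy: "\<forall>j<i. Sstar w beta ue y' ! j = tanh (w j * (Sstar w beta ue y' ! j) + beta j ue (take j (Sstar w beta ue y')))"
    using Sstar_props[of y' w beta ue] wpos lc ly by simp
  have kap: "\<forall>j<i. kappa w k j (Sstar w beta ue x' ! j) = kappa w k j (Sstar w beta ue y' ! j)"
  proof (intro allI impI)
    fix j assume "j < i"
    have "etabar w beta ue k x' ! j = etabar w beta ue k y' ! j" using eq by simp
    then show "kappa w k j (Sstar w beta ue x' ! j) = kappa w k j (Sstar w beta ue y' ! j)"
      unfolding etabar_def using \<open>j<i\<close> lx ly by simp
  qed
  have "Sstar w beta ue x' = Sstar w beta ue y'"
    apply (rule fix_unique_list[where s="Sstar w beta ue x'" and s'="Sstar w beta ue y'" and i=i and w=w and beta=beta and ue=ue and k=k])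
    using lx ly wpos Sx Sy kap by simp_all
  then have "(x', y') \<in> R" unfolding R_def by (rule simrel.base[OF x'X y'X])
  moreover have "(y', y) \<in> R" using y'(1) unfolding R_def by (rule simrel.sym)
  ultimately have "(x', y) \<in> R" unfolding R_def by (rule simrel.trans)
  with x'(1) have "(x, y) \<in> R" unfolding R_def by (rule simrel.trans)
  then show ?thesis unfolding R_def Xi_def .
qed

end
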